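(* Let $\|\cdot\|$ be a norm on $\mathbb{R}^d$, $\mathcal{X}\subseteq\mathbb{R}^d$ with $B=\sup_{x\in\mathcal{X}}\|x\|<\infty$, and $\gamma>0$. There is an online learner such that for every sequence $(x_1,y_1),\dots,(x_T,y_T)\in\mathcal{X}\times\{-1,+1\}$, $$\sum_{t=1}^T\mathbb{E}\,\mathbb{1}[\hat y_t\neq y_t]-\min_{w\in\mathbb{R}^d,\ \|w\|_\star=1}\sum_{t=1}^T\mathbb{1}[y_t\langle w,x_t\rangle\le\gamma]\le\sqrt{T\cdot d\ln\!\left(1+\frac{2B}{\gamma}\right)}.$$
   Context: Online binary classification: on rounds $t=1,\dots,T$ the adversary reveals $x_t\in\mathcal{X}$, the (possibly randomized) learner outputs $\hat y_t\in\{-1,+1\}$, then $y_t\in\{-1,+1\}$ is revealed; the expectation is over the learner's randomness. $\|w\|_\star=\sup_{\|x\|\le1}\langle w,x\rangle$ is the dual norm. *)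

theory Defs
  imports "HOL-Analysis.Analysis"
begin

definition is_norm :: "('a::real_vector \<Rightarrow> real) \<Rightarrow> bool" where
  "is_norm N \<longleftrightarrow>
     (\<forall>x. 0 \<le> N x) \<and> (\<forall>x. N x = 0 \<longleftrightarrow> x = 0) \<and>
     (\<forall>c x. N (c *\<^sub>R x) = \<bar>c\<bar> * N x) \<and> (\<forall>x y. N (x + y) \<le> N x + N y)"

definition dual_norm :: "('a::real_inner \<Rightarrow> real) \<Rightarrow> 'a \<Rightarrow> real" where
  "dual_norm N w = Sup {inner w x | x. N x \<le> 1}"

text \<open>A randomized online learner is represented by the probability q h x \<in> [0,1]
  that it predicts +1 on instance x after history h (list of past (x_s, y_s)).\<close>
definition expected_mistakes ::
  "(('a \<times> real) list \<Rightarrow> 'a \<Rightarrow> real) \<Rightarrow> nat \<Rightarrow> (nat \<Rightarrow> 'a) \<Rightarrow> (nat \<Rightarrow> real) \<Rightarrow> real" where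
  "expected_mistakes q T x y =
     (\<Sum>t<T. let p = q (map (\<lambda>s. (x s, y s)) [0..<t]) (x t)
            in if y t = 1 then 1 - p else p)"

definition margin_errors :: "real \<Rightarrow> nat \<Rightarrow> (nat \<Rightarrow> 'a::real_inner) \<Rightarrow> (nat \<Rightarrow> real) \<Rightarrow> 'a \<Rightarrow> nat" where
  "margin_errors \<gamma> T x y w = card {t. t < T \<and> y t * inner w (x t) \<le> \<gamma>}"

end

theory Submission
  imports Defs "HOL-Probability.Hoeffding"
begin


lemma isnD:
  assumes "is_norm N"
  shows "N x \<ge> 0" "N x = 0 \<longleftrightarrow> x = 0" "N (c *\<^sub>R x) = \<bar>c\<bar> * N x" "N (x + y) \<le> N x + N y"
  using assms unfolding is_norm_def by auto

lemma isn_0: "is_norm N \<Longrightarrow> N 0 = 0" using isnD(2) by blast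

lemma isn_minus: "is_norm N \<Longrightarrow> N (- x) = N x"
  using isnD(3)[of N "-1" x] by simp

lemma isn_diff: "is_norm N \<Longrightarrow> N x \<le> N (x - y) + N y"
  using isnD(4)[of N "x - y" y] by simp

lemma isn_sum: assumes "is_norm N" "finite I" shows "N (\<Sum>i\<in>I. f i) \<le> (\<Sum>i\<in>I. N (f i))"
  using assms(2)
proof (induction I rule: finite_induct)
  case empty then show ?case by (simp add: isn_0[OF assms(1)])
next
  case (insert a I)
  then show ?case using isnD(4)[OF assms(1), of "f a" "sum f I"] by simp
qed

lemma isn_upper:
  fixes N :: "'a::euclidean_space \<Rightarrow> real"
  assumes "is_norm N"
  shows "\<exists>c>0. \<forall>x. N x \<le> c * norm x"
proof -
  define c where "c = (\<Sum>b\<in>Basis. N b) + 1"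
  have c0: "c > 0" unfolding c_def using isnD(1)[OF assms] by (simp add: add_nonneg_pos sum_nonneg)
  have "N x \<le> c * norm x" for x
  proof -
    have "N x = N (\<Sum>b\<in>Basis. inner x b *\<^sub>R b)" by (simp add: euclidean_representation)
    also have "\<dots> \<le> (\<Sum>b\<in>Basis. N (inner x b *\<^sub>R b))" by (rule isn_sum[OF assms]) simp
    also have "\<dots> = (\<Sum>b\<in>Basis. \<bar>inner x b\<bar> * N b)" using isnD(3)[OF assms] by simp
    also have "\<dots> \<le> (\<Sum>b\<in>Basis. norm x * N b)"
      by (intro sum_mono mult_right_mono Basis_le_norm isnD(1)[OF assms])
    also have "\<dots> = norm x * (\<Sum>b\<in>Basis. N b)" by (simp add: sum_distrib_left)
    also have "\<dots> \<le> c * norm x" unfolding c_def by (simp add: algebra_simps)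
    finally show ?thesis .
  qed
  with c0 show ?thesis by blast
qed

lemma isn_lip:
  assumes "is_norm N"
  shows "\<bar>N x - N y\<bar> \<le> N (x - y)"
  using isn_diff[OF assms, of x y] isn_diff[OF assms, of y x] isn_minus[OF assms, of "x - y"] by simp

lemma isn_cont:
  fixes N :: "'a::euclidean_space \<Rightarrow> real"
  assumes "is_norm N"
  shows "continuous_on S N"
proof -
  obtain c where c: "c > 0" "\<And>x. N x \<le> c * norm x" using isn_upper[OF assms] by blast
  show ?thesis unfolding continuous_on_iff
  proof (intro ballI allI impI)
    fix x e assume "x \<in> S" "(e::real) > 0"
    show "\<exists>d>0. \<forall>x'\<in>S. dist x' x < d \<longrightarrow> dist (N x') (N x) < e"
    proof (intro exI[of _ "e / c"] conjI ballI impI)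
      show "e / c > 0" using c \<open>e > 0\<close> by simp
      fix x' assume "x' \<in> S" "dist x' x < e / c"
      have "dist (N x') (N x) \<le> N (x' - x)" using isn_lip[OF assms] by (simp add: dist_real_def)
      also have "\<dots> \<le> c * norm (x' - x)" by (rule c)
      also have "\<dots> < c * (e / c)" using \<open>dist x' x < e / c\<close> c by (simp add: dist_norm pos_less_divide_eq mult.commute)
      finally show "dist (N x') (N x) < e" using c by simp
    qed
  qed
qed

lemma isn_lower:
  fixes N :: "'a::euclidean_space \<Rightarrow> real"
  assumes "is_norm N"
  shows "\<exists>c>0. \<forall>x. c * norm x \<le> N x"
proof -
  have ne: "sphere (0::'a) 1 \<noteq> {}"
    using SOME_Basis norm_Basis[OF SOME_Basis] by (metis dist_0_norm empty_iff mem_sphere)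
  obtain u where u: "u \<in> sphere 0 1" "\<And>y. y \<in> sphere 0 1 \<Longrightarrow> N u \<le> N y"
    using continuous_attains_inf[OF compact_sphere ne isn_cont[OF assms]] by blast
  have u0: "u \<noteq> 0" using u(1) by auto
  have m: "N u > 0" using isnD(1,2)[OF assms, of u] u0 by linarith
  have "N u * norm x \<le> N x" for x
  proof (cases "x = 0")
    case True then show ?thesis by (simp add: isn_0[OF assms])
  next
    case False
    have "N u \<le> N ((1 / norm x) *\<^sub>R x)" using u(2) False by simp
    also have "\<dots> = N x / norm x" using isnD(3)[OF assms] by simp
    finally show ?thesis using False by (simp add: field_simps)
  qed
  with m show ?thesis by blast
qed

lemma dn_bdd:
  fixes N :: "'a::euclidean_space \<Rightarrow> real"
  assumes "is_norm N"
  shows "bdd_above {inner w x | x. N x \<le> 1}"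
proof -
  obtain c where c: "c > 0" "\<And>x. c * norm x \<le> N x" using isn_lower[OF assms] by blast
  have "inner w x \<le> norm w / c" if "N x \<le> 1" for x
  proof -
    have "c * norm x \<le> 1" using c(2)[of x] that by linarith
    then have nx: "norm x \<le> 1 / c" using c(1) by (simp add: field_simps)
    have "inner w x \<le> norm w * norm x" using norm_cauchy_schwarz by blast
    also have "\<dots> \<le> norm w * (1 / c)" by (intro mult_left_mono nx) simp
    finally show ?thesis by simp
  qed
  then show ?thesis unfolding bdd_above_def by blast
qed

lemma dn_upper1:
  fixes N :: "'a::euclidean_space \<Rightarrow> real"
  assumes "is_norm N" "N x \<le> 1"
  shows "inner w x \<le> dual_norm N w"
  unfolding dual_norm_def by (rule cSup_upper[OF _ dn_bdd[OF assms(1)]]) (use assms(2) in blast)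

lemma dn_least:
  fixes N :: "'a::euclidean_space \<Rightarrow> real"
  assumes "\<And>x. N x \<le> 1 \<Longrightarrow> inner w x \<le> M" "is_norm N"
  shows "dual_norm N w \<le> M"
  unfolding dual_norm_def
proof (rule cSup_least)
  have "\<exists>x. inner w 0 = inner w x \<and> N x \<le> 1" using isn_0[OF assms(2)] by (intro exI[of _ 0]) simp
  then have "inner w 0 \<in> {inner w x |x. N x \<le> 1}" by simp
  then show "{inner w x |x. N x \<le> 1} \<noteq> {}" by blast
qed (use assms(1) in blast)

lemma dn_ineq:
  fixes N :: "'a::euclidean_space \<Rightarrow> real"
  assumes "is_norm N"
  shows "inner w x \<le> dual_norm N w * N x"
proof (cases "x = 0")
  case True then show ?thesis by (simp add: isn_0[OF assms])
next
  case False
  then have p: "N x > 0" using isnD(1,2)[OF assms, of x] by linarith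
  have "N ((1 / N x) *\<^sub>R x) = 1" using isnD(3)[OF assms] p by simp
  then have "inner w ((1 / N x) *\<^sub>R x) \<le> dual_norm N w" by (intro dn_upper1[OF assms]) simp
  then have "inner w x / N x \<le> dual_norm N w" by simp
  then show ?thesis using p by (simp add: pos_divide_le_eq)
qed

lemma dn_abs:
  fixes N :: "'a::euclidean_space \<Rightarrow> real"
  assumes "is_norm N"
  shows "\<bar>inner w x\<bar> \<le> dual_norm N w * N x"
  using dn_ineq[OF assms, of w x] dn_ineq[OF assms, of w "-x"] isn_minus[OF assms, of x] by simp

lemma dn_lower:
  fixes N :: "'a::euclidean_space \<Rightarrow> real"
  assumes "is_norm N"
  shows "\<exists>c>0. \<forall>w. c * norm w \<le> dual_norm N w"
proof -
  obtain c where c: "c > 0" "\<And>x. N x \<le> c * norm x" using isn_upper[OF assms] by blast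
  have "(1/c) * norm w \<le> dual_norm N w" for w
  proof (cases "w = 0")
    case True
    then show ?thesis using dn_upper1[OF assms, of 0 w] by (simp add: isn_0[OF assms])
  next
    case False
    define x where "x = (1 / (c * norm w)) *\<^sub>R w"
    have "N x = N w / (c * norm w)" unfolding x_def using isnD(3)[OF assms] c(1) by simp
    also have "\<dots> \<le> 1" using c(2)[of w] c(1) False by (simp add: field_simps)
    finally have "inner w x \<le> dual_norm N w" by (rule dn_upper1[OF assms])
    moreover have "inner w x = norm w / c" unfolding x_def using False c(1)
      by (simp add: power2_norm_eq_inner[symmetric] power2_eq_square field_simps)
    ultimately show ?thesis by simp
  qed
  then show ?thesis using c(1) by (intro exI[of _ "1/c"]) simp
qed

lemma dn_is_norm:
  fixes N :: "'a::euclidean_space \<Rightarrow> real"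
  assumes N: "is_norm N"
  shows "is_norm (dual_norm N)"
proof -
  obtain c where c: "c > 0" "\<And>w. c * norm w \<le> dual_norm N w" using dn_lower[OF N] by blast
  have nn: "dual_norm N w \<ge> 0" for w using c(1) c(2)[of w] by (smt (verit) mult_nonneg_nonneg norm_ge_zero)
  have z: "dual_norm N w = 0 \<longleftrightarrow> w = 0" for w
  proof
    assume "dual_norm N w = 0" then show "w = 0" using c(2)[of w] c(1) by (smt (verit) mult_pos_pos zero_less_norm_iff)
  next
    assume "w = 0" then show "dual_norm N w = 0"
      using nn[of w] by (intro antisym dn_least[OF _ N]) auto
  qed
  have le: "dual_norm N (a *\<^sub>R w) \<le> \<bar>a\<bar> * dual_norm N w" for a w
  proof (rule dn_least[OF _ N])
    fix x assume x: "N x \<le> 1"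
    show "inner (a *\<^sub>R w) x \<le> \<bar>a\<bar> * dual_norm N w"
    proof (cases "a \<ge> 0")
      case True
      then show ?thesis using dn_upper1[OF N x, of w] by (simp add: mult_left_mono)
    next
      case False
      have "N (-x) \<le> 1" using x isn_minus[OF N] by simp
      then have "inner w (-x) \<le> dual_norm N w" by (rule dn_upper1[OF N])
      then have "(-a) * inner w (-x) \<le> (-a) * dual_norm N w" using False by (intro mult_left_mono) auto
      then show ?thesis using False by simp
    qed
  qed
  have hom: "dual_norm N (a *\<^sub>R w) = \<bar>a\<bar> * dual_norm N w" for a w
  proof (cases "a = 0")
    case True
    then show ?thesis using z by simp
  next
    case False
    have "dual_norm N w = dual_norm N (inverse a *\<^sub>R (a *\<^sub>R w))" using False by simp
    also have "\<dots> \<le> \<bar>inverse a\<bar> * dual_norm N (a *\<^sub>R w)" by (rule le)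
    finally have "\<bar>a\<bar> * dual_norm N w \<le> dual_norm N (a *\<^sub>R w)"
      using False by (simp add: field_simps abs_inverse)
    with le[of a w] show ?thesis by simp
  qed
  have tri: "dual_norm N (v + w) \<le> dual_norm N v + dual_norm N w" for v w
  proof (rule dn_least[OF _ N])
    fix x assume x: "N x \<le> 1"
    show "inner (v + w) x \<le> dual_norm N v + dual_norm N w"
      using dn_upper1[OF N x, of v] dn_upper1[OF N x, of w] by (simp add: inner_add_left)
  qed
  show ?thesis unfolding is_norm_def using nn z hom tri by blast
qed

lemma nball_closed:
  fixes M :: "'a::euclidean_space \<Rightarrow> real"
  assumes "is_norm M"
  shows "closed {v. M (v - a) \<le> r}"
  by (intro closed_Collect_le continuous_on_compose2[OF isn_cont[OF assms]] continuous_intros) auto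

lemma nball_bounded:
  fixes M :: "'a::euclidean_space \<Rightarrow> real"
  assumes "is_norm M"
  shows "bounded {v. M (v - a) \<le> r}"
proof -
  obtain c where c: "c > 0" "\<And>x. c * norm x \<le> M x" using isn_lower[OF assms] by blast
  have "{v. M (v - a) \<le> r} \<subseteq> cball a (r / c)"
  proof
    fix v assume "v \<in> {v. M (v - a) \<le> r}"
    then have "c * norm (v - a) \<le> r" using c(2)[of "v - a"] by simp
    then show "v \<in> cball a (r / c)" using c(1) by (simp add: dist_norm norm_minus_commute field_simps)
  qed
  then show ?thesis using bounded_subset bounded_cball by blast
qed

lemma nball_lmeas:
  fixes M :: "'a::euclidean_space \<Rightarrow> real"
  assumes "is_norm M"
  shows "{v. M (v - a) \<le> r} \<in> lmeasurable"
proof (intro bounded_set_imp_lmeasurable nball_bounded[OF assms] sets_completionI_sets)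
  show "{v. M (v - a) \<le> r} \<in> sets lborel" using borel_closed[OF nball_closed[OF assms]] by simp
qed

lemma nball_img:
  fixes M :: "'a::euclidean_space \<Rightarrow> real"
  assumes "is_norm M" "r > 0"
  shows "{v. M (v - a) \<le> r} = (\<lambda>u. r *\<^sub>R u + a) ` {u. M (u - 0) \<le> 1}"
proof (intro set_eqI iffI)
  fix v assume "v \<in> {v. M (v - a) \<le> r}"
  then have "M ((1/r) *\<^sub>R (v - a)) \<le> 1" unfolding isnD(3)[OF assms(1)] using assms(2) by (simp add: field_simps)
  moreover have "v = r *\<^sub>R ((1/r) *\<^sub>R (v - a)) + a" using assms(2) by simp
  ultimately show "v \<in> (\<lambda>u. r *\<^sub>R u + a) ` {u. M (u - 0) \<le> 1}" by force
next
  fix v assume "v \<in> (\<lambda>u. r *\<^sub>R u + a) ` {u. M (u - 0) \<le> 1}"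
  then obtain u where "M u \<le> 1" "v = r *\<^sub>R u + a" by auto
  then show "v \<in> {v. M (v - a) \<le> r}" using isnD(3)[OF assms(1), of r u] assms(2)
    by (simp add: mult_left_le)
qed

lemma nball_measure:
  fixes M :: "'a::euclidean_space \<Rightarrow> real"
  assumes "is_norm M" "r > 0"
  shows "measure lebesgue {v. M (v - a) \<le> r} = r ^ DIM('a) * measure lebesgue {u. M (u - 0) \<le> 1}"
  unfolding nball_img[OF assms, of a] using measure_lebesgue_affine[of r a] assms(2) by simp

lemma nball_pos:
  fixes M :: "'a::euclidean_space \<Rightarrow> real"
  assumes "is_norm M"
  shows "measure lebesgue {u. M (u - 0) \<le> 1} > 0"
proof -
  obtain c where c: "c > 0" "\<And>x. M x \<le> c * norm x" using isn_upper[OF assms] by blast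
  have sub: "cball 0 (1/c) \<subseteq> {u. M (u - 0) \<le> 1}"
  proof
    fix u assume "u \<in> cball (0::'a) (1/c)"
    then have "c * norm u \<le> 1" using c(1) by (simp add: field_simps)
    then show "u \<in> {u. M (u - 0) \<le> 1}" using c(2)[of u] by simp
  qed
  have "0 < measure lebesgue (cball (0::'a) (1/c))" using content_cball_pos[of "1/c" 0] c(1) by simp
  also have "\<dots> \<le> measure lebesgue {u. M (u - 0) \<le> 1}"
    by (intro measure_mono_fmeasurable sub nball_lmeas[OF assms]) simp
  finally show ?thesis .
qed

lemma pack_bound:
  fixes M :: "'a::euclidean_space \<Rightarrow> real"
  assumes M: "is_norm M" and e: "\<epsilon> > 0" and fin: "finite A" and sub: "A \<subseteq> {u. M u \<le> 1}"
    and sep: "\<forall>a\<in>A. \<forall>b\<in>A. a \<noteq> b \<longrightarrow> M (a - b) > \<epsilon>"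
  shows "real (card A) \<le> (1 + 2 / \<epsilon>) ^ DIM('a)"
proof -
  define \<rho> where "\<rho> = \<epsilon> / 2"
  have \<rho>: "\<rho> > 0" using e unfolding \<rho>_def by simp
  define U where "U a = {v. M (v - a) \<le> \<rho>}" for a
  define \<mu> where "\<mu> = measure lebesgue {u. M (u - 0) \<le> 1}"
  have \<mu>: "\<mu> > 0" unfolding \<mu>_def by (rule nball_pos[OF M])
  have Um: "U a \<in> lmeasurable" for a unfolding U_def by (rule nball_lmeas[OF M])
  have disj: "pairwise (\<lambda>a b. disjnt (U a) (U b)) A"
  proof (rule pairwiseI)
    fix a b assume ab: "a \<in> A" "b \<in> A" "a \<noteq> b"
    show "disjnt (U a) (U b)"
      unfolding disjnt_def
    proof (rule equals0I)
      fix v assume "v \<in> U a \<inter> U b"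
      then have "M (v - a) \<le> \<rho>" "M (v - b) \<le> \<rho>" unfolding U_def by auto
      moreover have "M (a - b) \<le> M (a - v) + M (v - b)" using isnD(4)[OF M, of "a - v" "v - b"] by simp
      moreover have "M (a - v) = M (v - a)" using isn_minus[OF M, of "v - a"] by simp
      ultimately have "M (a - b) \<le> \<epsilon>" unfolding \<rho>_def by simp
      with sep ab show False by force
    qed
  qed
  have unsub: "(\<Union>a\<in>A. U a) \<subseteq> {v. M (v - 0) \<le> 1 + \<rho>}"
  proof
    fix v assume "v \<in> (\<Union>a\<in>A. U a)"
    then obtain a where a: "a \<in> A" "M (v - a) \<le> \<rho>" unfolding U_def by auto
    have "M v \<le> M (v - a) + M a" by (rule isn_diff[OF M])
    with a sub show "v \<in> {v. M (v - 0) \<le> 1 + \<rho>}" by auto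
  qed
  have "measure lebesgue (\<Union>a\<in>A. U a) = (\<Sum>a\<in>A. measure lebesgue (U a))"
    by (rule measure_UNION'[OF fin Um disj])
  also have "\<dots> = real (card A) * (\<rho> ^ DIM('a) * \<mu>)"
    unfolding U_def \<mu>_def using nball_measure[OF M \<rho>] by simp
  finally have eq: "measure lebesgue (\<Union>a\<in>A. U a) = real (card A) * (\<rho> ^ DIM('a) * \<mu>)" .
  have "measure lebesgue (\<Union>a\<in>A. U a) \<le> measure lebesgue {v. M (v - 0) \<le> 1 + \<rho>}"
    by (intro measure_mono_fmeasurable unsub nball_lmeas[OF M] fmeasurableD fmeasurable.finite_UN fin Um)
  also have "\<dots> = (1 + \<rho>) ^ DIM('a) * \<mu>" unfolding \<mu>_def using nball_measure[OF M, of "1 + \<rho>" 0] \<rho> by simp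
  finally have "real (card A) * \<rho> ^ DIM('a) \<le> (1 + \<rho>) ^ DIM('a)" using eq \<mu> by simp
  then have "real (card A) \<le> (1 + \<rho>) ^ DIM('a) / \<rho> ^ DIM('a)" using \<rho> by (simp add: field_simps)
  also have "\<dots> = ((1 + \<rho>) / \<rho>) ^ DIM('a)" by (simp add: power_divide)
  also have "(1 + \<rho>) / \<rho> = 1 + 2 / \<epsilon>" unfolding \<rho>_def using e by (simp add: field_simps)
  finally show ?thesis .
qed

lemma cover:
  fixes M :: "'a::euclidean_space \<Rightarrow> real"
  assumes M: "is_norm M" and e: "\<epsilon> > 0"
  shows "\<exists>C. finite C \<and> real (card C) \<le> (1 + 2 / \<epsilon>) ^ DIM('a) \<and> (\<forall>w. M w \<le> 1 \<longrightarrow> (\<exists>c\<in>C. M (w - c) \<le> \<epsilon>))"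
proof -
  define P where "P A \<longleftrightarrow> finite A \<and> A \<subseteq> {u. M u \<le> 1} \<and> (\<forall>a\<in>A. \<forall>b\<in>A. a \<noteq> b \<longrightarrow> M (a - b) > \<epsilon>)" for A
  define K where "K = (1 + 2 / \<epsilon>) ^ DIM('a)"
  have bnd: "P A \<Longrightarrow> real (card A) \<le> K" for A unfolding P_def K_def using pack_bound[OF M e] by blast
  have "P A \<Longrightarrow> card A < nat \<lceil>K\<rceil> + 1" for A using bnd[of A] by linarith
  then obtain A where A: "P A" "\<And>B. P B \<Longrightarrow> card B \<le> card A"
    using ex_has_greatest_nat[of P "{}" card "nat \<lceil>K\<rceil> + 1"] unfolding P_def by auto
  have cov: "\<exists>c\<in>A. M (w - c) \<le> \<epsilon>" if w: "M w \<le> 1" for w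
  proof (rule ccontr)
    assume "\<not> ?thesis"
    then have far: "\<forall>c\<in>A. M (w - c) > \<epsilon>" by auto
    have wA: "w \<notin> A" using far e isn_0[OF M] by force
    have "P (insert w A)" unfolding P_def
    proof (intro conjI ballI impI)
      show "finite (insert w A)" using A(1) unfolding P_def by simp
      show "insert w A \<subseteq> {u. M u \<le> 1}" using A(1) w unfolding P_def by simp
      fix a b assume ab: "a \<in> insert w A" "b \<in> insert w A" "a \<noteq> b"
      have "M (b - a) = M (a - b)" using isn_minus[OF M, of "a - b"] by simp
      then show "M (a - b) > \<epsilon>" using ab far A(1) unfolding P_def by auto
    qed
    then have "card (insert w A) \<le> card A" by (rule A(2))
    moreover have "card (insert w A) = card A + 1" using wA A(1) unfolding P_def by simp
    ultimately show False by simp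
  qed
  show ?thesis using A(1) bnd cov unfolding K_def P_def by blast
qed



lemma hoeff01:
  fixes p \<eta> :: real
  assumes "0 \<le> p" "p \<le> 1" "\<eta> \<ge> 0"
  shows "ln (1 - p + p * exp (-\<eta>)) \<le> -\<eta> * p + \<eta>\<^sup>2 / 8"
proof -
  define Z where "Z = 1 + (1 - p) * (exp \<eta> - 1)"
  have Z1: "Z \<ge> 1" unfolding Z_def using assms by (intro add_increasing2 mult_nonneg_nonneg) auto
  have "-\<eta> * (1 - p) + ln Z \<le> \<eta>\<^sup>2 / 8" unfolding Z_def
    using Hoeffdings_lemma_aux[of \<eta> "1 - p"] assms by simp
  moreover have "1 - p + p * exp (-\<eta>) = exp (-\<eta>) * Z"
    unfolding Z_def by (simp add: algebra_simps exp_minus field_simps)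
  moreover have "ln (exp (-\<eta>) * Z) = -\<eta> + ln Z" using Z1 by (simp add: ln_mult)
  ultimately show ?thesis by (simp add: algebra_simps)
qed

lemma hedge:
  fixes C :: "'c set" and l :: "nat \<Rightarrow> 'c \<Rightarrow> real"
  assumes fin: "finite C" and c: "c \<in> C" and \<eta>: "\<eta> > 0" and l01: "\<And>t c. c \<in> C \<Longrightarrow> l t c = 0 \<or> l t c = 1"
  shows "(\<Sum>t<T. (\<Sum>c\<in>C. exp (-\<eta> * (\<Sum>s<t. l s c)) * l t c) / (\<Sum>c\<in>C. exp (-\<eta> * (\<Sum>s<t. l s c))))
         \<le> (\<Sum>t<T. l t c) + ln (card C) / \<eta> + \<eta> * T / 8"
proof -
  define e where "e t c = exp (-\<eta> * (\<Sum>s<t. l s c))" for t c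
  define W where "W t = (\<Sum>c\<in>C. e t c)" for t
  define p where "p t = (\<Sum>c\<in>C. e t c * l t c) / W t" for t
  have Wpos: "W t > 0" for t unfolding W_def e_def using fin c by (intro sum_pos) auto
  have p01: "0 \<le> p t \<and> p t \<le> 1" for t
  proof -
    have "(\<Sum>c\<in>C. e t c * l t c) \<le> W t" unfolding W_def
    proof (intro sum_mono)
      fix c assume "c \<in> C"
      then show "e t c * l t c \<le> e t c" using l01[OF \<open>c \<in> C\<close>, of t] by (auto simp: e_def)
    qed
    moreover have "(\<Sum>c\<in>C. e t c * l t c) \<ge> 0" 
    proof (intro sum_nonneg)
      fix c assume "c \<in> C"
      then show "0 \<le> e t c * l t c" using l01[OF \<open>c \<in> C\<close>, of t] by (auto simp: e_def)
    qed
    ultimately show ?thesis unfolding p_def using Wpos[of t] by (simp add: divide_le_eq_1)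
  qed
  have step: "W (Suc t) = W t * (1 - p t + p t * exp (-\<eta>))" for t
  proof -
    have "W (Suc t) = (\<Sum>c\<in>C. e t c * (1 - l t c + l t c * exp (-\<eta>)))" unfolding W_def
    proof (intro sum.cong refl)
      fix c assume "c \<in> C"
      have "e (Suc t) c = e t c * exp (-\<eta> * l t c)" unfolding e_def
        by (simp add: algebra_simps exp_add[symmetric])
      also have "exp (-\<eta> * l t c) = 1 - l t c + l t c * exp (-\<eta>)" using l01[OF \<open>c \<in> C\<close>, of t] by auto
      finally show "e (Suc t) c = e t c * (1 - l t c + l t c * exp (-\<eta>))" .
    qed
    also have "\<dots> = (\<Sum>c\<in>C. e t c - (1 - exp (-\<eta>)) * (e t c * l t c))"
      by (intro sum.cong refl) (simp add: algebra_simps)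
    also have "\<dots> = W t - (1 - exp (-\<eta>)) * (\<Sum>c\<in>C. e t c * l t c)" unfolding W_def
      by (simp add: sum_subtractf sum_distrib_left)
    also have "(\<Sum>c\<in>C. e t c * l t c) = p t * W t" unfolding p_def using Wpos[of t] by simp
    also have "W t - (1 - exp (-\<eta>)) * (p t * W t) = W t * (1 - p t + p t * exp (-\<eta>))"
      by (simp add: algebra_simps)
    finally show ?thesis .
  qed
  have ind: "ln (W t) \<le> ln (card C) - \<eta> * (\<Sum>s<t. p s) + t * \<eta>\<^sup>2 / 8" for t
  proof (induction t)
    case 0
    have "W 0 = real (card C)" unfolding W_def e_def by simp
    then show ?case by simp
  next
    case (Suc t)
    have a: "0 \<le> (1 - p t) * (1 - exp (-\<eta>))" using p01[of t] \<eta> by (intro mult_nonneg_nonneg) auto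
    have b: "(1 - p t) * (1 - exp (-\<eta>)) = 1 - p t + p t * exp (-\<eta>) - exp (-\<eta>)" by (simp add: algebra_simps)
    have pos: "1 - p t + p t * exp (-\<eta>) > 0" using a b exp_gt_zero[of "-\<eta>"] by linarith
    have "ln (W (Suc t)) = ln (W t) + ln (1 - p t + p t * exp (-\<eta>))"
      unfolding step using Wpos[of t] pos by (simp add: ln_mult)
    also have "\<dots> \<le> ln (W t) + (-\<eta> * p t + \<eta>\<^sup>2 / 8)"
      using hoeff01[of "p t" \<eta>] p01[of t] \<eta> by simp
    finally have r: "ln (W (Suc t)) \<le> ln (W t) + (-\<eta> * p t + \<eta>\<^sup>2 / 8)" .
    have q1: "\<eta> * (\<Sum>s<Suc t. p s) = \<eta> * (\<Sum>s<t. p s) + \<eta> * p t" by (simp add: distrib_left)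
    have q2: "real (Suc t) * \<eta>\<^sup>2 / 8 = real t * \<eta>\<^sup>2 / 8 + \<eta>\<^sup>2 / 8" by (simp add: field_simps)
    show ?case using Suc r q1 q2 by linarith
  qed
  have "e T c \<le> W T" unfolding W_def using fin c by (intro member_le_sum) (auto simp: e_def)
  then have "ln (e T c) \<le> ln (W T)" using Wpos[of T] by (subst ln_le_cancel_iff) (auto simp: e_def)
  then have "-\<eta> * (\<Sum>s<T. l s c) \<le> ln (card C) - \<eta> * (\<Sum>s<T. p s) + T * \<eta>\<^sup>2 / 8"
    using ind[of T] by (simp add: e_def)
  then have "\<eta> * (\<Sum>s<T. p s) \<le> \<eta> * ((\<Sum>s<T. l s c) + ln (card C) / \<eta> + \<eta> * T / 8)"
  proof -
    have "\<eta> * (ln (card C) / \<eta>) = ln (card C)" using \<eta> by simp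
    moreover have "\<eta> * (\<eta> * T / 8) = T * \<eta>\<^sup>2 / 8" by (simp add: power2_eq_square)
    ultimately have "\<eta> * ((\<Sum>s<T. l s c) + ln (card C) / \<eta> + \<eta> * T / 8) = \<eta> * (\<Sum>s<T. l s c) + ln (card C) + T * \<eta>\<^sup>2 / 8"
      by (simp add: distrib_left)
    then show ?thesis using \<open>-\<eta> * (\<Sum>s<T. l s c) \<le> ln (card C) - \<eta> * (\<Sum>s<T. p s) + T * \<eta>\<^sup>2 / 8\<close> by linarith
  qed
  then have "(\<Sum>s<T. p s) \<le> (\<Sum>s<T. l s c) + ln (card C) / \<eta> + \<eta> * T / 8"
    using \<eta> by (simp add: mult_le_cancel_left_pos)
  then show ?thesis unfolding p_def W_def e_def .
qed


definition lossf :: "'a::real_inner \<Rightarrow> 'a \<Rightarrow> real \<Rightarrow> real" where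
  "lossf c z yv = (if yv = 1 then (if inner c z > 0 then 0 else 1) else (if inner c z > 0 then 1 else 0))"

definition hwt :: "real \<Rightarrow> ('a::real_inner \<times> real) list \<Rightarrow> 'a \<Rightarrow> real" where
  "hwt \<eta> h c = exp (-\<eta> * sum_list (map (\<lambda>(a,b). lossf c a b) h))"

definition hq :: "'a::real_inner set \<Rightarrow> real \<Rightarrow> ('a \<times> real) list \<Rightarrow> 'a \<Rightarrow> real" where
  "hq C \<eta> h z = (\<Sum>c\<in>C. hwt \<eta> h c * (if inner c z > 0 then 1 else 0)) / (\<Sum>c\<in>C. hwt \<eta> h c)"

lemma hq_01: "0 \<le> hq C \<eta> h z \<and> hq C \<eta> h z \<le> 1"
proof -
  have nn: "0 \<le> (\<Sum>c\<in>C. hwt \<eta> h c * (if inner c z > 0 then 1 else 0))"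
    by (intro sum_nonneg) (simp add: hwt_def)
  have le: "(\<Sum>c\<in>C. hwt \<eta> h c * (if inner c z > 0 then 1 else 0)) \<le> (\<Sum>c\<in>C. hwt \<eta> h c)"
    by (intro sum_mono) (simp add: hwt_def)
  show ?thesis unfolding hq_def using nn le
    by (cases "(\<Sum>c\<in>C. hwt \<eta> h c) = 0") (auto simp: divide_le_eq_1)
qed

lemma hist_sum: "sum_list (map (\<lambda>(a,b). lossf c a b) (map (\<lambda>s. (x s, y s)) [0..<t])) = (\<Sum>s<t. lossf c (x s) (y s))"
  by (simp add: comp_def interv_sum_list_conv_sum_set_nat atLeast0LessThan)

lemma hq_exp:
  fixes C :: "'a::real_inner set"
  assumes fin: "finite C" and ne: "C \<noteq> {}" and y: "\<forall>t<T. y t \<in> {-1, 1}"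
  shows "expected_mistakes (hq C \<eta>) T x y =
    (\<Sum>t<T. (\<Sum>c\<in>C. exp (-\<eta> * (\<Sum>s<t. lossf c (x s) (y s))) * lossf c (x t) (y t)) /
             (\<Sum>c\<in>C. exp (-\<eta> * (\<Sum>s<t. lossf c (x s) (y s)))))"
  unfolding expected_mistakes_def
proof (intro sum.cong refl)
  fix t assume t: "t \<in> {..<T}"
  define E where "E c = exp (-\<eta> * (\<Sum>s<t. lossf c (x s) (y s)))" for c
  have hw: "hwt \<eta> (map (\<lambda>s. (x s, y s)) [0..<t]) c = E c" for c
    unfolding hwt_def E_def hist_sum ..
  define W where "W = (\<Sum>c\<in>C. E c)"
  have Wpos: "W > 0" unfolding W_def E_def using fin ne by (intro sum_pos) auto
  have p: "hq C \<eta> (map (\<lambda>s. (x s, y s)) [0..<t]) (x t) = (\<Sum>c\<in>C. E c * (if inner c (x t) > 0 then 1 else 0)) / W"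
    unfolding hq_def hw W_def ..
  have main: "(let p = hq C \<eta> (map (\<lambda>s. (x s, y s)) [0..<t]) (x t) in if y t = 1 then 1 - p else p) =
        (\<Sum>c\<in>C. E c * lossf c (x t) (y t)) / W"
  proof (cases "y t = 1")
    case True
    have "(\<Sum>c\<in>C. E c * lossf c (x t) (y t)) = (\<Sum>c\<in>C. E c - E c * (if inner c (x t) > 0 then 1 else 0))"
      by (intro sum.cong refl) (simp add: lossf_def True)
    also have "\<dots> = W - (\<Sum>c\<in>C. E c * (if inner c (x t) > 0 then 1 else 0))" unfolding W_def by (simp add: sum_subtractf)
    finally show ?thesis using True Wpos p by (simp add: diff_divide_distrib Let_def)
  next
    case False
    have "(\<Sum>c\<in>C. E c * lossf c (x t) (y t)) = (\<Sum>c\<in>C. E c * (if inner c (x t) > 0 then 1 else 0))"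
      by (intro sum.cong refl) (simp add: lossf_def False)
    then show ?thesis using False p by (simp add: Let_def)
  qed
  then show "(let p = hq C \<eta> (map (\<lambda>s. (x s, y s)) [0..<t]) (x t) in if y t = 1 then 1 - p else p) =
    (\<Sum>c\<in>C. exp (-\<eta> * (\<Sum>s<t. lossf c (x s) (y s))) * lossf c (x t) (y t)) /
             (\<Sum>c\<in>C. exp (-\<eta> * (\<Sum>s<t. lossf c (x s) (y s))))" unfolding W_def E_def .
qed

lemma lossf_01: "lossf c z yv = 0 \<or> lossf c z yv = 1"
  unfolding lossf_def by auto

theorem theorem14:
  fixes N :: "real ^ 'd \<Rightarrow> real"
    and X :: "(real ^ 'd) set"
    and \<gamma> :: real
    and T :: nat
  assumes "is_norm N"
    and "bdd_above (N ` X)"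
    and "\<gamma> > 0"
  shows "\<exists>q :: ((real ^ 'd) \<times> real) list \<Rightarrow> real ^ 'd \<Rightarrow> real.
           (\<forall>h z. 0 \<le> q h z \<and> q h z \<le> 1) \<and>
           (\<forall>x :: nat \<Rightarrow> real ^ 'd. \<forall>y :: nat \<Rightarrow> real.
              (\<forall>t<T. x t \<in> X \<and> y t \<in> {-1, 1}) \<longrightarrow>
              expected_mistakes q T x y
                - real (Min {margin_errors \<gamma> T x y w | w. dual_norm N w = 1})
              \<le> sqrt (real T * real CARD('d) * ln (1 + 2 * Sup (N ` X) / \<gamma>)))"
proof -
  note N = assms(1)
  define D where "D = dual_norm N"
  have Dn: "is_norm D" unfolding D_def by (rule dn_is_norm[OF N])
  define B where "B = Sup (N ` X)"
  define d where "d = CARD('d)"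
  define L where "L = ln (1 + 2 * B / \<gamma>)"
  have NB: "N z \<le> B" if "z \<in> X" for z unfolding B_def using assms(2) that by (intro cSup_upper) auto
  have exw: "\<exists>w. D w = 1"
  proof -
    obtain b :: "real ^ 'd" where b: "b \<in> Basis" using SOME_Basis by blast
    then have "b \<noteq> 0" by auto
    then have pos: "D b > 0" using isnD(1,2)[OF Dn, of b] by linarith
    have "D ((1 / D b) *\<^sub>R b) = 1" using isnD(3)[OF Dn] pos by simp
    then show ?thesis by blast
  qed
  have minw: "\<exists>w0. D w0 = 1 \<and> Min {margin_errors \<gamma> T x y w | w. dual_norm N w = 1} = margin_errors \<gamma> T x y w0"
    for x :: "nat \<Rightarrow> real ^ 'd" and y :: "nat \<Rightarrow> real"
  proof -
    let ?S = "{margin_errors \<gamma> T x y w | w. dual_norm N w = 1}"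
    have "?S \<subseteq> {..T}"
    proof
      fix m assume "m \<in> ?S"
      then obtain w where "m = margin_errors \<gamma> T x y w" by blast
      moreover have "card {t. t < T \<and> y t * inner w (x t) \<le> \<gamma>} \<le> card {..<T}"
        by (intro card_mono) auto
      ultimately show "m \<in> {..T}" unfolding margin_errors_def by simp
    qed
    then have "finite ?S" using finite_subset by blast
    moreover have "?S \<noteq> {}" using exw unfolding D_def by blast
    ultimately have "Min ?S \<in> ?S" by (rule Min_in)
    then show ?thesis unfolding D_def by blast
  qed
  show ?thesis
  proof (cases "T = 0 \<or> X = {}")
    case True
    show ?thesis
    proof (intro exI[of _ "\<lambda>_ _. 0"] conjI allI impI)
      fix x :: "nat \<Rightarrow> real ^ 'd" and y :: "nat \<Rightarrow> real"
      assume h: "\<forall>t<T. x t \<in> X \<and> y t \<in> {-1, 1}"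
      have "T = 0" using True h by auto
      then show "expected_mistakes (\<lambda>_ _. 0) T x y - real (Min {margin_errors \<gamma> T x y w | w. dual_norm N w = 1})
              \<le> sqrt (real T * real CARD('d) * ln (1 + 2 * Sup (N ` X) / \<gamma>))"
        by (simp add: expected_mistakes_def)
    qed auto
  next
    case False
    then have T0: "T > 0" and Xne: "X \<noteq> {}" by auto
    obtain x0 where "x0 \<in> X" using Xne by blast
    then have B0: "B \<ge> 0" using NB[of x0] isnD(1)[OF N, of x0] by linarith
    show ?thesis
    proof (cases "B = 0")
      case True
      show ?thesis
      proof (intro exI[of _ "\<lambda>_ _. 0"] conjI allI impI)
        fix x :: "nat \<Rightarrow> real ^ 'd" and y :: "nat \<Rightarrow> real"
        assume h: "\<forall>t<T. x t \<in> X \<and> y t \<in> {-1, 1}"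
        obtain w0 where w0: "D w0 = 1" "Min {margin_errors \<gamma> T x y w | w. dual_norm N w = 1} = margin_errors \<gamma> T x y w0"
          using minw by blast
        have x0: "x t = 0" if "t < T" for t
          using NB[of "x t"] h that True isnD(1,2)[OF N, of "x t"] by force
        have "{t. t < T \<and> y t * inner w0 (x t) \<le> \<gamma>} = {..<T}" using x0 assms(3) by auto
        then have me: "margin_errors \<gamma> T x y w0 = T" unfolding margin_errors_def by simp
        have "expected_mistakes (\<lambda>_ _. 0) T x y \<le> (\<Sum>t<T. 1)"
          unfolding expected_mistakes_def by (intro sum_mono) simp
        then show "expected_mistakes (\<lambda>_ _. 0) T x y - real (Min {margin_errors \<gamma> T x y w | w. dual_norm N w = 1})
              \<le> sqrt (real T * real CARD('d) * ln (1 + 2 * Sup (N ` X) / \<gamma>))"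
          using w0(2) me True unfolding B_def by simp
      qed auto
    next
      case False
      then have Bp: "B > 0" using B0 by simp
      define \<epsilon> where "\<epsilon> = \<gamma> / B"
      have ep: "\<epsilon> > 0" unfolding \<epsilon>_def using Bp assms(3) by simp
      obtain C where C: "finite C" "real (card C) \<le> (1 + 2 / \<epsilon>) ^ DIM(real ^ 'd)"
        "\<And>w. D w \<le> 1 \<Longrightarrow> \<exists>c\<in>C. D (w - c) \<le> \<epsilon>"
        using cover[OF Dn ep] by blast
      have Cne: "C \<noteq> {}" using C(3)[of 0] isn_0[OF Dn] by auto
      have d0: "d > 0" unfolding d_def by simp
      have eq1: "1 + 2 / \<epsilon> = 1 + 2 * B / \<gamma>" unfolding \<epsilon>_def by simp
      have L0: "L > 0" unfolding L_def using Bp assms(3) by (intro ln_gt_zero) simp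
      have lnC: "ln (real (card C)) \<le> real d * L"
      proof -
        have c1: "real (card C) > 0" using C(1) Cne by (simp add: card_gt_0_iff)
        have "ln (real (card C)) \<le> ln ((1 + 2 * B / \<gamma>) ^ d)"
          using C(2) c1 eq1 unfolding d_def by simp
        also have "\<dots> = real d * L" unfolding L_def using Bp assms(3) by (simp add: ln_realpow)
        finally show ?thesis .
      qed
      define r where "r = sqrt (real T * real d * L)"
      have r0: "r > 0" unfolding r_def using T0 d0 L0 by simp
      have r2: "r * r = real T * real d * L" unfolding r_def using T0 d0 L0
        by (simp add: less_imp_le)
      define \<eta> where "\<eta> = 4 * r / real T"
      have \<eta>0: "\<eta> > 0" unfolding \<eta>_def using r0 T0 by simp
      have bound: "ln (real (card C)) / \<eta> + \<eta> * real T / 8 \<le> r"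
      proof -
        have "ln (real (card C)) / \<eta> \<le> real d * L / \<eta>" using lnC \<eta>0 by (simp add: divide_right_mono)
        also have "\<dots> = r / 4" unfolding \<eta>_def using r0 T0 r2
          by (simp add: field_simps)
        finally have a: "ln (real (card C)) / \<eta> \<le> r / 4" .
        have b: "\<eta> * real T / 8 = r / 2" unfolding \<eta>_def using T0 by simp
        show ?thesis using a b r0 by linarith
      qed
      show ?thesis
      proof (intro exI[of _ "hq C \<eta>"] conjI allI impI)
        fix h z show "0 \<le> hq C \<eta> h z" "hq C \<eta> h z \<le> 1" using hq_01 by auto
      next
        fix x :: "nat \<Rightarrow> real ^ 'd" and y :: "nat \<Rightarrow> real"
        assume h: "\<forall>t<T. x t \<in> X \<and> y t \<in> {-1, 1}"
        obtain w0 where w0: "D w0 = 1" "Min {margin_errors \<gamma> T x y w | w. dual_norm N w = 1} = margin_errors \<gamma> T x y w0"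
          using minw by blast
        obtain c where c: "c \<in> C" "D (w0 - c) \<le> \<epsilon>" using C(3)[of w0] w0(1) by auto
        define l where "l s c = lossf c (x s) (y s)" for s c
        have pt: "l t c \<le> (if y t * inner w0 (x t) \<le> \<gamma> then 1 else 0)" if t: "t < T" for t
        proof (cases "y t * inner w0 (x t) \<le> \<gamma>")
          case True then show ?thesis unfolding l_def lossf_def by auto
        next
          case False
          have xt: "x t \<in> X" and yt: "y t \<in> {-1, 1}" using h t by auto
          have "\<bar>inner (w0 - c) (x t)\<bar> \<le> D (w0 - c) * N (x t)" unfolding D_def by (rule dn_abs[OF N])
          also have "\<dots> \<le> \<epsilon> * B" using c(2) NB[OF xt] isnD(1)[OF Dn] isnD(1)[OF N] ep
            by (intro mult_mono) auto
          also have "\<dots> = \<gamma>" unfolding \<epsilon>_def using Bp by simp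
          finally have ab: "\<bar>inner (w0 - c) (x t)\<bar> \<le> \<gamma>" .
          have "y t * inner c (x t) > 0"
          proof -
            have "y t * inner (w0 - c) (x t) \<le> \<gamma>" using ab yt by auto
            moreover have "y t * inner c (x t) = y t * inner w0 (x t) - y t * inner (w0 - c) (x t)"
              by (simp add: inner_diff_left algebra_simps)
            ultimately show ?thesis using False by linarith
          qed
          then have "l t c = 0" using yt unfolding l_def lossf_def by (auto simp: zero_less_mult_iff)
          then show ?thesis using False by simp
        qed
        have "(\<Sum>t<T. l t c) \<le> (\<Sum>t<T. if y t * inner w0 (x t) \<le> \<gamma> then 1 else 0)"
          by (intro sum_mono pt) auto
        also have "\<dots> = real (card {t \<in> {..<T}. y t * inner w0 (x t) \<le> \<gamma>})"
          by (simp add: sum.inter_filter[symmetric])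
        also have "{t \<in> {..<T}. y t * inner w0 (x t) \<le> \<gamma>} = {t. t < T \<and> y t * inner w0 (x t) \<le> \<gamma>}" by auto
        finally have lm: "(\<Sum>t<T. l t c) \<le> real (margin_errors \<gamma> T x y w0)" unfolding margin_errors_def .
        have yy: "\<forall>t<T. y t \<in> {-1, 1}" using h by auto
        have "expected_mistakes (hq C \<eta>) T x y =
          (\<Sum>t<T. (\<Sum>c\<in>C. exp (-\<eta> * (\<Sum>s<t. l s c)) * l t c) / (\<Sum>c\<in>C. exp (-\<eta> * (\<Sum>s<t. l s c))))"
          unfolding l_def by (rule hq_exp[OF C(1) Cne yy])
        also have "\<dots> \<le> (\<Sum>t<T. l t c) + ln (card C) / \<eta> + \<eta> * T / 8"
          by (rule hedge[OF C(1) c(1) \<eta>0]) (simp add: l_def lossf_01)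
        finally have "expected_mistakes (hq C \<eta>) T x y \<le> real (margin_errors \<gamma> T x y w0) + r"
          using lm bound by linarith
        then show "expected_mistakes (hq C \<eta>) T x y - real (Min {margin_errors \<gamma> T x y w | w. dual_norm N w = 1})
              \<le> sqrt (real T * real CARD('d) * ln (1 + 2 * Sup (N ` X) / \<gamma>))"
          using w0(2) unfolding r_def d_def L_def B_def by simp
      qed
    qed
  qed
qed

end
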